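(* Let $F$ be a recurrent set and let $X\subset F$ be a bifix code of finite $F$-degree $d$. Then for every $w\in F$, $\delta_X(w)=\min\{d,\delta_{K(X)}(w)\}$. In particular, $X$ is determined by its $F$-degree and its kernel.
   Context: $A$ is a finite alphabet. $F\subset A^*$ is recurrent if it is nonempty, closed under factors, and for all $u,w\in F$ there is $v\in F$ with $uvw\in F$. A bifix code is a set of nonempty words none of which is a proper prefix or proper suffix of another. For a set $Y$, a parse of $w$ with respect to $Y$ is a triple $(v,y,u)$ with $w=vyu$, $v\in A^*\setminus A^*Y$, $y\in Y^*$, $u\in A^*\setminus YA^*$; $\delta_Y(w)$ is the number of parses, and $d_F(X)=\max_{w\in F}\delta_X(w)$. The kernel is $K(X)=\{x\in X\mid A^+xA^+\cap X\ne\emptyset\}$. *)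

theory Defs
  imports Main "HOL-Library.Extended_Nat"
begin

definition factorial :: "'a list set \<Rightarrow> bool" where
  "factorial F \<longleftrightarrow> (\<forall>w\<in>F. \<forall>p v s. w = p @ v @ s \<longrightarrow> v \<in> F)"

definition recurrent :: "'a list set \<Rightarrow> bool" where
  "recurrent F \<longleftrightarrow> F \<noteq> {} \<and> factorial F \<and>
     (\<forall>u\<in>F. \<forall>w\<in>F. \<exists>v\<in>F. u @ v @ w \<in> F)"

definition bifix_code :: "'a list set \<Rightarrow> bool" where
  "bifix_code X \<longleftrightarrow> [] \<notin> X \<and>
     (\<forall>x\<in>X. \<forall>y\<in>X. \<forall>z. y = x @ z \<longrightarrow> z = []) \<and>
     (\<forall>x\<in>X. \<forall>y\<in>X. \<forall>z. y = z @ x \<longrightarrow> z = [])"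

definition kstar :: "'a list set \<Rightarrow> 'a list set" where
  "kstar Y = {concat ys | ys. set ys \<subseteq> Y}"

text \<open>A^*Y (words having a suffix in Y) and YA^* (words having a prefix in Y).\<close>
definition suffix_in :: "'a list set \<Rightarrow> 'a list set" where
  "suffix_in Y = {s @ y | s y. y \<in> Y}"

definition prefix_in :: "'a list set \<Rightarrow> 'a list set" where
  "prefix_in Y = {y @ s | y s. y \<in> Y}"

definition parses :: "'a list set \<Rightarrow> 'a list \<Rightarrow> ('a list \<times> 'a list \<times> 'a list) set" where
  "parses Y w = {(v, y, u). w = v @ y @ u \<and> v \<notin> suffix_in Y \<and> y \<in> kstar Y \<and> u \<notin> prefix_in Y}"

definition delta :: "'a list set \<Rightarrow> 'a list \<Rightarrow> nat" where
  "delta Y w = card (parses Y w)"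

definition degree :: "'a list set \<Rightarrow> 'a list set \<Rightarrow> enat" where
  "degree F X = (SUP w\<in>F. enat (delta X w))"

definition kernel :: "'a list set \<Rightarrow> 'a list set" where
  "kernel X = {x \<in> X. \<exists>p s. p \<noteq> [] \<and> s \<noteq> [] \<and> p @ x @ s \<in> X}"

end

theory Submission
  imports Defs
begin

lemma kstar_Nil: "[] \<in> kstar X"
  unfolding kstar_def by (auto intro: exI[of _ "[]"])

lemma kstar_snoc: "y \<in> kstar X \<Longrightarrow> x \<in> X \<Longrightarrow> y @ x \<in> kstar X"
proof -
  assume "y \<in> kstar X" "x \<in> X"
  then obtain ys where "y = concat ys" "set ys \<subseteq> X" unfolding kstar_def by auto
  then show ?thesis unfolding kstar_def using \<open>x \<in> X\<close> by (auto intro!: exI[of _ "ys @ [x]"])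
qed

lemma kstar_cases: "y \<in> kstar X \<Longrightarrow> y = [] \<or> (\<exists>y' x. y' \<in> kstar X \<and> x \<in> X \<and> y = y' @ x)"
proof -
  assume "y \<in> kstar X"
  then obtain ys where ys: "y = concat ys" "set ys \<subseteq> X" unfolding kstar_def by auto
  show ?thesis
  proof (cases ys rule: rev_cases)
    case Nil then show ?thesis using ys by simp
  next
    case (snoc zs z)
    then have "concat zs \<in> kstar X" using ys unfolding kstar_def by auto
    then show ?thesis using ys snoc by auto
  qed
qed

lemma exists_fact:
  assumes "[] \<notin> X"
  shows "\<exists>v y. t = v @ y \<and> v \<notin> suffix_in X \<and> y \<in> kstar X"
proof (induction "length t" arbitrary: t rule: less_induct)
  case less
  show ?case
  proof (cases "t \<in> suffix_in X")
    case False then show ?thesis using kstar_Nil by (metis append_Nil2)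
  next
    case True
    then obtain s x where sx: "t = s @ x" "x \<in> X" unfolding suffix_in_def by auto
    with assms have "x \<noteq> []" by auto
    then have "length s < length t" using sx by simp
    then obtain v y where "s = v @ y" "v \<notin> suffix_in X" "y \<in> kstar X" using less by blast
    then show ?thesis using sx kstar_snoc by (metis append.assoc)
  qed
qed

lemma unique_fact:
  assumes b: "bifix_code X"
  shows "t = v @ y \<Longrightarrow> v \<notin> suffix_in X \<Longrightarrow> y \<in> kstar X \<Longrightarrow>
         t = v' @ y' \<Longrightarrow> v' \<notin> suffix_in X \<Longrightarrow> y' \<in> kstar X \<Longrightarrow> v = v' \<and> y = y'"
proof (induction "length t" arbitrary: t v y v' y' rule: less_induct)
  case less
  note IH = less(1)
  have t1: "t = v @ y" and nv: "v \<notin> suffix_in X" and ky: "y \<in> kstar X"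
   and t2: "t = v' @ y'" and nv': "v' \<notin> suffix_in X" and ky': "y' \<in> kstar X" using less(2-7) by auto
  have ne: "[] \<notin> X" and sc: "\<forall>x\<in>X. \<forall>y\<in>X. \<forall>z. y = z @ x \<longrightarrow> z = []"
    using b unfolding bifix_code_def by auto
  from kstar_cases[OF ky] kstar_cases[OF ky'] show ?case
  proof (elim disjE exE conjE)
    assume "y = []" "y' = []" then show ?thesis using t1 t2 by simp
  next
    fix y1 x1 assume h: "y = []" "y1 \<in> kstar X" "x1 \<in> X" "y' = y1 @ x1"
    then have "v = (v' @ y1) @ x1" using t1 t2 by simp
    then have "v \<in> suffix_in X" using h unfolding suffix_in_def by blast
    then show ?thesis using nv by simp
  next
    fix y1 x1 assume h: "y' = []" "y1 \<in> kstar X" "x1 \<in> X" "y = y1 @ x1"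
    then have "v' = (v @ y1) @ x1" using t1 t2 by simp
    then have "v' \<in> suffix_in X" using h unfolding suffix_in_def by blast
    then show ?thesis using nv' by simp
  next
    fix y1 x1 y1' x1'
    assume h: "y1 \<in> kstar X" "x1 \<in> X" "y = y1 @ x1" "y1' \<in> kstar X" "x1' \<in> X" "y' = y1' @ x1'"
    have e: "(v @ y1) @ x1 = (v' @ y1') @ x1'" using t1 t2 h by simp
    have "x1 = x1'"
    proof -
      from e obtain us where "(v @ y1) = (v' @ y1') @ us \<and> us @ x1 = x1' \<or> (v @ y1) @ us = v' @ y1' \<and> x1 = us @ x1'"
        using append_eq_append_conv2 by blast
      then show ?thesis
      proof
        assume "(v @ y1) = (v' @ y1') @ us \<and> us @ x1 = x1'"
        then have "us = []" using sc h(2,5) by blast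
        then show ?thesis using \<open>(v @ y1) = (v' @ y1') @ us \<and> us @ x1 = x1'\<close> by simp
      next
        assume "(v @ y1) @ us = v' @ y1' \<and> x1 = us @ x1'"
        then have "us = []" using sc h(2,5) by blast
        then show ?thesis using \<open>(v @ y1) @ us = v' @ y1' \<and> x1 = us @ x1'\<close> by simp
      qed
    qed
    with e have e2: "v @ y1 = v' @ y1'" by simp
    have "x1 \<noteq> []" using ne h by auto
    then have lt: "length (v @ y1) < length t" using t1 h by simp
    have "v = v' \<and> y1 = y1'" using IH[OF lt refl nv h(1) e2 nv' h(4)] .
    then show ?thesis using h \<open>x1 = x1'\<close> by simp
  qed
qed

definition pf :: "'a list \<times> 'a list \<times> 'a list \<Rightarrow> nat" where
  "pf p = length (fst p) + length (fst (snd p))"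

lemma parses_im1: "pf ` parses X w \<subseteq> {j. j \<le> length w \<and> drop j w \<notin> prefix_in X}"
proof
  fix j assume "j \<in> pf ` parses X w"
  then obtain p where p: "p \<in> parses X w" "j = pf p" by blast
  obtain v y u where pp: "p = (v, y, u)" by (cases p)
  have "(v, y, u) \<in> parses X w" using p pp by simp
  then have w1: "w = v @ y @ u" and nu: "u \<notin> prefix_in X" unfolding parses_def by simp_all
  have jj: "j = length v + length y" using p pp by (simp add: pf_def)
  have "drop j w = u" using w1 jj by simp
  moreover have "j \<le> length w" using w1 jj by simp
  ultimately show "j \<in> {j. j \<le> length w \<and> drop j w \<notin> prefix_in X}" using nu by simp
qed

lemma parses_inj:
  assumes b: "bifix_code X"
  shows "inj_on pf (parses X w)"
proof (rule inj_onI)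
  fix p q assume p1: "p \<in> parses X w" and p2: "q \<in> parses X w" and eq: "pf p = pf q"
  obtain v y u where pp: "p = (v, y, u)" by (cases p)
  obtain v' y' u' where qq: "q = (v', y', u')" by (cases q)
  have q1: "(v, y, u) \<in> parses X w" using p1 pp by simp
  have q2: "(v', y', u') \<in> parses X w" using p2 qq by simp
  have w1: "w = v @ y @ u" and a1: "v \<notin> suffix_in X" "y \<in> kstar X" using q1 unfolding parses_def by simp_all
  have w2: "w = v' @ y' @ u'" and a2: "v' \<notin> suffix_in X" "y' \<in> kstar X" using q2 unfolding parses_def by simp_all
  have l: "length v + length y = length v' + length y'" using eq pp qq by (simp add: pf_def)
  have "u = drop (length v + length y) w" using w1 by simp
  moreover have "u' = drop (length v' + length y') w" using w2 by simp
  ultimately have uu: "u = u'" using l by simp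
  have t: "v @ y = v' @ y'" using w1 w2 uu by (metis append.assoc append_same_eq)
  have "v = v' \<and> y = y'" using unique_fact[OF b refl a1 t a2] .
  then show "p = q" using pp qq uu by simp
qed

lemma parses_im2:
  assumes b: "bifix_code X"
  shows "{j. j \<le> length w \<and> drop j w \<notin> prefix_in X} \<subseteq> pf ` parses X w"
proof
  have ne: "[] \<notin> X" using b unfolding bifix_code_def by auto
  fix j assume j: "j \<in> {j. j \<le> length w \<and> drop j w \<notin> prefix_in X}"
  obtain v y where vy: "take j w = v @ y" "v \<notin> suffix_in X" "y \<in> kstar X"
    using exists_fact[OF ne] by blast
  have jl: "j \<le> length w" and jd: "drop j w \<notin> prefix_in X" using j by simp_all
  have "w = v @ y @ drop j w" using vy by (metis append.assoc append_take_drop_id)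
  then have "(v, y, drop j w) \<in> parses X w" using vy jd unfolding parses_def by simp
  moreover have "length (take j w) = j" using jl by simp
  then have "pf (v, y, drop j w) = j" using vy(1) by (simp add: pf_def)
  ultimately show "j \<in> pf ` parses X w" by (metis image_eqI)
qed

lemma card_parses:
  assumes b: "bifix_code X"
  shows "delta X w = card {j. j \<le> length w \<and> drop j w \<notin> prefix_in X}"
proof -
  have "bij_betw pf (parses X w) {j. j \<le> length w \<and> drop j w \<notin> prefix_in X}"
    unfolding bij_betw_def using parses_inj[OF b] parses_im1 parses_im2[OF b] by blast
  then show ?thesis unfolding delta_def by (rule bij_betw_same_card)
qed

lemma cnt_Cons:
  "card {j. j \<le> length (a#u) \<and> drop j (a#u) \<notin> P} =
   (if a#u \<in> P then 0 else 1) + card {j. j \<le> length u \<and> drop j u \<notin> P}"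
proof -
  let ?A = "{j. j \<le> length u \<and> drop j u \<notin> P}"
  let ?B = "{j. j = (0::nat) \<and> a#u \<notin> P}"
  have eq: "{j. j \<le> length (a#u) \<and> drop j (a#u) \<notin> P} = ?B \<union> Suc ` ?A"
  proof (rule set_eqI)
    fix j show "j \<in> {j. j \<le> length (a#u) \<and> drop j (a#u) \<notin> P} \<longleftrightarrow> j \<in> ?B \<union> Suc ` ?A"
      by (cases j) auto
  qed
  have fA: "finite ?A" by (rule finite_subset[of _ "{..length u}"]) auto
  have fB: "finite ?B" by (rule finite_subset[of _ "{0}"]) auto
  have d: "?B \<inter> Suc ` ?A = {}" by auto
  have cB: "card ?B = (if a#u \<in> P then 0 else 1)" by (cases "a#u \<in> P") auto
  have "card (?B \<union> Suc ` ?A) = card ?B + card (Suc ` ?A)"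
    using fA fB d by (simp add: card_Un_disjoint)
  also have "card (Suc ` ?A) = card ?A" by (simp add: card_image)
  finally show ?thesis using eq cB by simp
qed

lemma delta_Cons:
  assumes "bifix_code X"
  shows "delta X (a#u) = delta X u + (if a#u \<in> prefix_in X then 0 else 1)"
proof -
  have h: "card {j. j \<le> length (a#u) \<and> drop j (a#u) \<notin> prefix_in X} =
   (if a#u \<in> prefix_in X then 0 else 1) + card {j. j \<le> length u \<and> drop j u \<notin> prefix_in X}"
    by (rule cnt_Cons)
  show ?thesis unfolding card_parses[OF assms] using h by linarith
qed

lemma delta_Nil:
  assumes "bifix_code X"
  shows "delta X [] = 1"
proof -
  have "[] \<notin> X" using assms unfolding bifix_code_def by auto
  then have "[] \<notin> prefix_in X" unfolding prefix_in_def by auto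
  then have "{j. j \<le> length ([]::'a list) \<and> drop j [] \<notin> prefix_in X} = {0}" by auto
  then show ?thesis using card_parses[OF assms] by simp
qed

lemma bifix_rev:
  assumes b: "bifix_code X" shows "bifix_code (rev ` X)"
proof -
  have ne: "[] \<notin> X" and pc: "\<forall>x\<in>X. \<forall>y\<in>X. \<forall>z. y = x @ z \<longrightarrow> z = []"
    and sc: "\<forall>x\<in>X. \<forall>y\<in>X. \<forall>z. y = z @ x \<longrightarrow> z = []"
    using b unfolding bifix_code_def by auto
  have 1: "[] \<notin> rev ` X" using ne by auto
  have 2: "\<forall>x\<in>rev ` X. \<forall>y\<in>rev ` X. \<forall>z. y = x @ z \<longrightarrow> z = []"
  proof (intro ballI allI impI)
    fix x y z assume x: "x \<in> rev ` X" and y: "y \<in> rev ` X" and e: "y = x @ z"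
    then obtain x0 y0 where "x0 \<in> X" "y0 \<in> X" "x = rev x0" "y = rev y0" by blast
    then have "y0 = rev z @ x0" using e by (metis rev_append rev_rev_ident)
    then have "rev z = []" using sc \<open>x0 \<in> X\<close> \<open>y0 \<in> X\<close> by blast
    then show "z = []" by simp
  qed
  have 3: "\<forall>x\<in>rev ` X. \<forall>y\<in>rev ` X. \<forall>z. y = z @ x \<longrightarrow> z = []"
  proof (intro ballI allI impI)
    fix x y z assume x: "x \<in> rev ` X" and y: "y \<in> rev ` X" and e: "y = z @ x"
    then obtain x0 y0 where "x0 \<in> X" "y0 \<in> X" "x = rev x0" "y = rev y0" by blast
    then have "y0 = x0 @ rev z" using e by (metis rev_append rev_rev_ident)
    then have "rev z = []" using pc \<open>x0 \<in> X\<close> \<open>y0 \<in> X\<close> by blast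
    then show "z = []" by simp
  qed
  show ?thesis unfolding bifix_code_def using 1 2 3 by blast
qed

lemma pref_rev: "(rev u \<in> prefix_in (rev ` X)) = (u \<in> suffix_in X)"
proof
  assume "rev u \<in> prefix_in (rev ` X)"
  then obtain y s where "rev u = y @ s" "y \<in> rev ` X" unfolding prefix_in_def by blast
  then obtain x where "x \<in> X" "y = rev x" by blast
  then have "u = rev s @ x" using \<open>rev u = y @ s\<close> by (metis rev_append rev_rev_ident)
  then show "u \<in> suffix_in X" unfolding suffix_in_def using \<open>x \<in> X\<close> by blast
next
  assume "u \<in> suffix_in X"
  then obtain s x where "u = s @ x" "x \<in> X" unfolding suffix_in_def by blast
  then have "rev u = rev x @ rev s" "rev x \<in> rev ` X" by auto
  then show "rev u \<in> prefix_in (rev ` X)" unfolding prefix_in_def by blast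
qed

lemma suf_rev: "(rev u \<in> suffix_in (rev ` X)) = (u \<in> prefix_in X)"
proof
  assume "rev u \<in> suffix_in (rev ` X)"
  then obtain y s where "rev u = s @ y" "y \<in> rev ` X" unfolding suffix_in_def by blast
  then obtain x where "x \<in> X" "y = rev x" by blast
  then have "u = x @ rev s" using \<open>rev u = s @ y\<close> by (metis rev_append rev_rev_ident)
  then show "u \<in> prefix_in X" unfolding prefix_in_def using \<open>x \<in> X\<close> by blast
next
  assume "u \<in> prefix_in X"
  then obtain s x where "u = x @ s" "x \<in> X" unfolding prefix_in_def by blast
  then have "rev u = rev s @ rev x" "rev x \<in> rev ` X" by auto
  then show "rev u \<in> suffix_in (rev ` X)" unfolding suffix_in_def by blast
qed

lemma kstar_rev: "y \<in> kstar X \<Longrightarrow> rev y \<in> kstar (rev ` X)"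
proof -
  assume "y \<in> kstar X"
  then obtain ys where ys: "y = concat ys" "set ys \<subseteq> X" unfolding kstar_def by auto
  have "rev y = concat (rev (map rev ys))" using ys by (simp add: rev_concat rev_map)
  moreover have "set (rev (map rev ys)) \<subseteq> rev ` X" using ys by auto
  ultimately show ?thesis unfolding kstar_def by blast
qed

lemma parses_rev_sub:
  "(v, y, u) \<in> parses X w \<Longrightarrow> (rev u, rev y, rev v) \<in> parses (rev ` X) (rev w)"
proof -
  assume "(v, y, u) \<in> parses X w"
  then have h: "w = v @ y @ u" "v \<notin> suffix_in X" "y \<in> kstar X" "u \<notin> prefix_in X"
    unfolding parses_def by simp_all
  have "rev w = rev u @ rev y @ rev v" using h by simp
  moreover have "rev u \<notin> suffix_in (rev ` X)" using h suf_rev[of u X] by simp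
  moreover have "rev v \<notin> prefix_in (rev ` X)" using h pref_rev[of v X] by simp
  moreover have "rev y \<in> kstar (rev ` X)" using h kstar_rev by simp
  ultimately show ?thesis unfolding parses_def by simp
qed

lemma delta_rev: "delta (rev ` X) (rev w) = delta X w"
proof -
  let ?g = "\<lambda>(v::'a list, y::'a list, u::'a list). (rev u, rev y, rev v)"
  have rr: "rev ` rev ` X = X" by (simp add: image_image)
  have "parses (rev ` X) (rev w) = ?g ` parses X w"
  proof
    show "?g ` parses X w \<subseteq> parses (rev ` X) (rev w)"
      using parses_rev_sub by auto
  next
    show "parses (rev ` X) (rev w) \<subseteq> ?g ` parses X w"
    proof
      fix p assume p: "p \<in> parses (rev ` X) (rev w)"
      obtain v y u where pp: "p = (v, y, u)" by (cases p)
      have "(rev u, rev y, rev v) \<in> parses (rev ` rev ` X) (rev (rev w))"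
        using parses_rev_sub p pp by blast
      then have "(rev u, rev y, rev v) \<in> parses X w" using rr by simp
      moreover have "p = ?g (rev u, rev y, rev v)" using pp by simp
      ultimately show "p \<in> ?g ` parses X w" by blast
    qed
  qed
  moreover have "inj_on ?g (parses X w)" by (rule inj_onI) auto
  ultimately show ?thesis unfolding delta_def by (simp add: card_image)
qed

lemma delta_snoc:
  assumes b: "bifix_code X"
  shows "delta X (u @ [a]) = delta X u + (if u @ [a] \<in> suffix_in X then 0 else 1)"
proof -
  have "delta X (u @ [a]) = delta (rev ` X) (a # rev u)" using delta_rev[of X "u @ [a]"] by simp
  also have "\<dots> = delta (rev ` X) (rev u) + (if a # rev u \<in> prefix_in (rev ` X) then 0 else 1)"
    using delta_Cons[OF bifix_rev[OF b]] by simp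
  also have "a # rev u = rev (u @ [a])" by simp
  finally show ?thesis using delta_rev[of X u] pref_rev[of "u @ [a]" X] by simp
qed

lemma delta_left_mono:
  assumes b: "bifix_code X" shows "delta X s \<le> delta X (t @ s)"
proof (induction t)
  case Nil then show ?case by simp
next
  case (Cons a t)
  then show ?case using delta_Cons[OF b, of a "t @ s"] by simp
qed

lemma delta_right_mono:
  assumes b: "bifix_code X" shows "delta X u \<le> delta X (u @ t)"
proof (induction t rule: rev_induct)
  case Nil then show ?case by simp
next
  case (snoc a t)
  then show ?case using delta_snoc[OF b, of "u @ t" a] by simp
qed

lemma right_trunc:
  assumes b: "bifix_code X"
  shows "(\<forall>k. 0 < k \<and> k \<le> length t \<longrightarrow> u @ take k t \<in> suffix_in X) \<Longrightarrow> delta X (u @ t) = delta X u"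
proof (induction t rule: rev_induct)
  case Nil then show ?case by simp
next
  case (snoc a t)
  have "\<forall>k. 0 < k \<and> k \<le> length t \<longrightarrow> u @ take k t \<in> suffix_in X"
  proof (intro allI impI)
    fix k assume k: "0 < k \<and> k \<le> length t"
    have z: "k - length t = 0" using k by simp
    have "0 < k \<and> k \<le> length (t @ [a])" using k by simp
    then have "u @ take k (t @ [a]) \<in> suffix_in X" using snoc.prems by blast
    then show "u @ take k t \<in> suffix_in X" using k z by simp
  qed
  then have ih: "delta X (u @ t) = delta X u" using snoc.IH by simp
  have "0 < length (t @ [a]) \<and> length (t @ [a]) \<le> length (t @ [a])" by simp
  then have "u @ take (length (t @ [a])) (t @ [a]) \<in> suffix_in X" using snoc.prems by blast
  then have "(u @ t) @ [a] \<in> suffix_in X" by simp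
  then show ?case using delta_snoc[OF b, of "u @ t" a] ih by simp
qed

lemma bifix_subset: "bifix_code X \<Longrightarrow> Y \<subseteq> X \<Longrightarrow> bifix_code Y"
  unfolding bifix_code_def by blast

lemma kernel_sub: "kernel X \<subseteq> X"
  unfolding kernel_def by blast

lemma delta_sub:
  assumes b: "bifix_code X" and Y: "Y \<subseteq> X"
  shows "delta X w \<le> delta Y w"
proof (induction w)
  case Nil
  then show ?case using delta_Nil[OF b] delta_Nil[OF bifix_subset[OF b Y]] by simp
next
  case (Cons a u)
  have "prefix_in Y \<subseteq> prefix_in X" using Y unfolding prefix_in_def by blast
  then show ?case using Cons delta_Cons[OF b, of a u] delta_Cons[OF bifix_subset[OF b Y], of a u]
    by (auto split: if_splits)
qed

lemma delta_internal:
  assumes b: "bifix_code X"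
  shows "(\<exists>p q. p \<noteq> [] \<and> q \<noteq> [] \<and> p @ w @ q \<in> X) \<Longrightarrow> delta X w = delta (kernel X) w"
proof (induction w)
  case Nil
  then show ?case using delta_Nil[OF b] delta_Nil[OF bifix_subset[OF b kernel_sub]] by simp
next
  case (Cons a u)
  then obtain p q where pq: "p \<noteq> []" "q \<noteq> []" "p @ (a # u) @ q \<in> X" by blast
  then have "(p @ [a]) @ u @ q \<in> X" by simp
  then have ih: "delta X u = delta (kernel X) u" using Cons.IH pq by blast
  have "(a # u \<in> prefix_in X) = (a # u \<in> prefix_in (kernel X))"
  proof
    assume "a # u \<in> prefix_in X"
    then obtain x s where xs: "a # u = x @ s" "x \<in> X" unfolding prefix_in_def by blast
    have "p @ x @ (s @ q) \<in> X" using pq xs by simp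
    moreover have "s @ q \<noteq> []" using pq by simp
    ultimately have "x \<in> kernel X" using xs pq unfolding kernel_def by blast
    then show "a # u \<in> prefix_in (kernel X)" using xs unfolding prefix_in_def by blast
  next
    assume "a # u \<in> prefix_in (kernel X)"
    then show "a # u \<in> prefix_in X" using kernel_sub unfolding prefix_in_def by blast
  qed
  then show ?case using ih delta_Cons[OF b, of a u] delta_Cons[OF bifix_subset[OF b kernel_sub], of a u]
    by simp
qed

lemma degree_le:
  assumes "degree F X = enat d" "w \<in> F"
  shows "delta X w \<le> d"
proof -
  have "enat (delta X w) \<le> (SUP w\<in>F. enat (delta X w))" using assms(2) by (rule SUP_upper)
  then show ?thesis using assms(1) unfolding degree_def by simp
qed

lemma degree_attained:
  assumes "degree F X = enat d" "F \<noteq> {}"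
  shows "\<exists>w\<in>F. delta X w = d"
proof (rule ccontr)
  assume "\<not> ?thesis"
  then have lt: "\<forall>w\<in>F. delta X w < d" using degree_le[OF assms(1)] by (meson le_neq_implies_less)
  obtain w0 where "w0 \<in> F" using assms(2) by blast
  then have "d > 0" using lt by fastforce
  have "(SUP w\<in>F. enat (delta X w)) \<le> enat (d - 1)"
    by (rule SUP_least) (use lt in force)
  then show False using assms(1) \<open>d > 0\<close> unfolding degree_def by simp
qed

lemma fact_mid: "factorial F \<Longrightarrow> p @ v @ s \<in> F \<Longrightarrow> v \<in> F"
  unfolding factorial_def by blast

lemma hard:
  assumes rec: "recurrent F" and b: "bifix_code X" and deg: "degree F X = enat d"
    and w: "w \<in> F" and ni: "\<not> (\<exists>p q. p \<noteq> [] \<and> q \<noteq> [] \<and> p @ w @ q \<in> X)"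
  shows "delta X w = d"
proof -
  have Fne: "F \<noteq> {}" and fac: "factorial F" and re: "\<forall>u\<in>F. \<forall>w\<in>F. \<exists>v\<in>F. u @ v @ w \<in> F"
    using rec unfolding recurrent_def by auto
  obtain w0 where w0: "w0 \<in> F" "delta X w0 = d" using degree_attained[OF deg Fne] by blast
  obtain v1 where v1: "w0 @ v1 @ w \<in> F" using re w0(1) w by blast
  obtain v2 where v2: "(w0 @ v1 @ w) @ v2 @ w0 \<in> F" using re v1 w0(1) by blast
  define R where "R = v2 @ w0"
  define W where "W = w0 @ v1 @ w @ R"
  have WF: "W \<in> F" using v2 unfolding W_def R_def by simp
  have pref: "w0 @ t @ [a] \<in> suffix_in X" if h: "w0 @ t @ [a] \<in> F" for t a
  proof -
    have h2: "w0 @ t \<in> F" using fact_mid[OF fac, of "[]" "w0 @ t" "[a]"] h by simp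
    have e1: "delta X (w0 @ t @ [a]) = d"
      using degree_le[OF deg h] delta_right_mono[OF b, of w0 "t @ [a]"] w0(2) by simp
    have e2: "delta X (w0 @ t) = d"
      using degree_le[OF deg h2] delta_right_mono[OF b, of w0 t] w0(2) by simp
    have "delta X ((w0 @ t) @ [a]) = delta X (w0 @ t) + (if (w0 @ t) @ [a] \<in> suffix_in X then 0 else 1)"
      by (rule delta_snoc[OF b])
    then show ?thesis using e1 e2 by (simp split: if_splits)
  qed
  have trunc: "\<forall>k. 0 < k \<and> k \<le> length R \<longrightarrow> w @ take k R \<in> suffix_in X"
  proof (intro allI impI)
    fix k assume k: "0 < k \<and> k \<le> length R"
    define t where "t = take (k - 1) R"
    define a where "a = R ! (k - 1)"
    have kk: "k - 1 < length R" "Suc (k - 1) = k" using k by auto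
    have "take (Suc (k - 1)) R = t @ [a]" unfolding t_def a_def using take_Suc_conv_app_nth[OF kk(1)] .
    then have tk: "take k R = t @ [a]" using kk(2) by simp
    have "W = [] @ (w0 @ (v1 @ w @ t) @ [a]) @ drop k R" unfolding W_def
      using tk by (metis append.assoc append_Nil append_take_drop_id)
    then have "w0 @ (v1 @ w @ t) @ [a] \<in> F" using fact_mid[OF fac] WF by metis
    then have "w0 @ (v1 @ w @ t) @ [a] \<in> suffix_in X" by (rule pref)
    then obtain s x where sx: "w0 @ (v1 @ w @ t) @ [a] = s @ x" "x \<in> X" unfolding suffix_in_def by blast
    then have e: "(w0 @ v1) @ (w @ take k R) = s @ x" using tk by simp
    then obtain us where "(w0 @ v1 = s @ us \<and> us @ (w @ take k R) = x) \<or> ((w0 @ v1) @ us = s \<and> w @ take k R = us @ x)"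
      using append_eq_append_conv2[of "w0 @ v1" "w @ take k R" s x] by blast
    then show "w @ take k R \<in> suffix_in X"
    proof
      assume A: "w0 @ v1 = s @ us \<and> us @ (w @ take k R) = x"
      show ?thesis
      proof (cases "us = []")
        case True
        then have "w @ take k R = [] @ x" using A by simp
        then show ?thesis using sx(2) unfolding suffix_in_def by blast
      next
        case False
        have "take k R \<noteq> []" using tk by simp
        then have "\<exists>p q. p \<noteq> [] \<and> q \<noteq> [] \<and> p @ w @ q \<in> X" using False A sx(2) by blast
        then show ?thesis using ni by blast
      qed
    next
      assume B: "(w0 @ v1) @ us = s \<and> w @ take k R = us @ x"
      then show ?thesis using sx(2) unfolding suffix_in_def by blast
    qed
  qed
  have e1: "delta X (w @ R) = delta X w" using right_trunc[OF b trunc] .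
  have "d \<le> delta X ((w @ v2) @ w0)" using delta_left_mono[OF b, of w0 "w @ v2"] w0(2) by simp
  then have "d \<le> delta X (w @ R)" unfolding R_def by simp
  then show ?thesis using e1 degree_le[OF deg w] by simp
qed

lemma part1:
  assumes rec: "recurrent F" and b: "bifix_code X" and deg: "degree F X = enat d" and w: "w \<in> F"
  shows "delta X w = min d (delta (kernel X) w)"
proof (cases "\<exists>p q. p \<noteq> [] \<and> q \<noteq> [] \<and> p @ w @ q \<in> X")
  case True
  then have "delta X w = delta (kernel X) w" by (rule delta_internal[OF b])
  then show ?thesis using degree_le[OF deg w] by simp
next
  case False
  then have "delta X w = d" using hard[OF rec b deg w] by blast
  moreover have "delta X w \<le> delta (kernel X) w" by (rule delta_sub[OF b kernel_sub])
  ultimately show ?thesis by simp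
qed

lemma eqP:
  assumes XF: "X \<subseteq> F" and YF: "Y \<subseteq> F" and bX: "bifix_code X" and bY: "bifix_code Y"
    and fac: "factorial F" and eq: "\<forall>w\<in>F. delta X w = delta Y w"
  shows "X \<subseteq> Y"
proof
  have key: "(w \<in> prefix_in X) = (w \<in> prefix_in Y)" if w: "w \<in> F" "w \<noteq> []" for w
  proof -
    obtain a u where au: "w = a # u" using w(2) by (cases w) auto
    have uF: "u \<in> F" using fact_mid[OF fac, of "[a]" u "[]"] w au by simp
    have "delta X (a # u) = delta Y (a # u)" using eq w au by simp
    moreover have "delta X u = delta Y u" using eq uF by simp
    ultimately show ?thesis using delta_Cons[OF bX, of a u] delta_Cons[OF bY, of a u] au
      by (simp split: if_splits)
  qed
  have pc: "\<forall>x\<in>X. \<forall>y\<in>X. \<forall>z. y = x @ z \<longrightarrow> z = []" and neX: "[] \<notin> X" and neY: "[] \<notin> Y"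
    using bX bY unfolding bifix_code_def by auto
  fix x assume x: "x \<in> X"
  have "x \<in> prefix_in X" using x unfolding prefix_in_def by (metis (mono_tags) append_Nil2 mem_Collect_eq)
  moreover have "x \<in> F" "x \<noteq> []" using x XF neX by auto
  ultimately have "x \<in> prefix_in Y" using key by blast
  then obtain y s where ys: "x = y @ s" "y \<in> Y" unfolding prefix_in_def by blast
  have "y \<in> prefix_in Y" using ys unfolding prefix_in_def by (metis (mono_tags) append_Nil2 mem_Collect_eq)
  moreover have "y \<in> F" "y \<noteq> []" using ys YF neY by auto
  ultimately have "y \<in> prefix_in X" using key by blast
  then obtain x' s' where xs': "y = x' @ s'" "x' \<in> X" unfolding prefix_in_def by blast
  have "x = x' @ (s' @ s)" using ys xs' by simp
  then have "s' @ s = []" using pc x xs'(2) by blast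
  then show "x \<in> Y" using ys by simp
qed

theorem mainTheorem7:
  fixes F X :: "('a::finite) list set" and d :: nat
  assumes "recurrent F" and "X \<subseteq> F" and "bifix_code X"
    and "degree F X = enat d"
  shows "(\<forall>w\<in>F. delta X w = min d (delta (kernel X) w)) \<and>
         (\<forall>Y. Y \<subseteq> F \<and> bifix_code Y \<and> degree F Y = enat d \<and> kernel Y = kernel X \<longrightarrow> Y = X)"
proof
  show p1: "\<forall>w\<in>F. delta X w = min d (delta (kernel X) w)"
    using part1[OF assms(1,3,4)] by blast
  show "\<forall>Y. Y \<subseteq> F \<and> bifix_code Y \<and> degree F Y = enat d \<and> kernel Y = kernel X \<longrightarrow> Y = X"
  proof (intro allI impI)
    fix Y assume Y: "Y \<subseteq> F \<and> bifix_code Y \<and> degree F Y = enat d \<and> kernel Y = kernel X"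
    have fac: "factorial F" using assms(1) unfolding recurrent_def by auto
    have eq: "\<forall>w\<in>F. delta X w = delta Y w"
      using p1 part1[OF assms(1), of Y d] Y by auto
    have "X \<subseteq> Y" using eqP[OF assms(2) _ assms(3) _ fac eq] Y by blast
    moreover have "Y \<subseteq> X" using eqP[OF _ assms(2) _ assms(3) fac] eq Y by auto
    ultimately show "Y = X" by blast
  qed
qed

end
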